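(* Let $G=(V,E)$ be an $(n-4)$-regular graph on $n>4$ nodes and let $\emptyset\ne V_i\subseteq V$ with $|V_i|=t_in$. Then $n(n-4)\,\mathsf M(V_i)\le (4t_i^2-t_i)\,n$. In particular, if $|V_i|\le n/4$ then $\mathsf M(V_i)\le 0$, and if $|V_i|=(\frac14+\delta)n$ with $\delta>0$ then $n(n-4)\mathsf M(V_i)\le(4\delta^2+\delta)n$.
   Context: For a finite simple undirected graph $G=(V,E)$ with $m=|E|\ge1$ edges, degrees $d_v$, and $a_{u,v}=1$ if $\{u,v\}\in E$ and $0$ otherwise: for $C\subseteq V$, $\mathsf M(C)=\frac{1}{2m}\sum_{u\in C}\sum_{v\in C}\big(a_{u,v}-\frac{d_ud_v}{2m}\big)$, the sum over all ordered pairs including $u=v$. *)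

theory Defs
  imports Complex_Main
begin

definition simple_graph :: "'a set \<Rightarrow> 'a set set \<Rightarrow> bool" where
  "simple_graph V E \<longleftrightarrow> finite V \<and> (\<forall>e\<in>E. \<exists>u v. e = {u, v} \<and> u \<noteq> v \<and> u \<in> V \<and> v \<in> V)"

definition adj :: "'a set set \<Rightarrow> 'a \<Rightarrow> 'a \<Rightarrow> real" where
  "adj E u v = (if {u, v} \<in> E then 1 else 0)"

definition degree :: "'a set \<Rightarrow> 'a set set \<Rightarrow> 'a \<Rightarrow> nat" where
  "degree V E v = card {u \<in> V. {u, v} \<in> E}"

definition regular :: "'a set \<Rightarrow> 'a set set \<Rightarrow> nat \<Rightarrow> bool" where
  "regular V E k \<longleftrightarrow> (\<forall>v\<in>V. degree V E v = k)"

definition modularity :: "'a set \<Rightarrow> 'a set set \<Rightarrow> 'a set \<Rightarrow> real" where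
  "modularity V E C =
    (let m = real (card E) in
     (1 / (2 * m)) * (\<Sum>u\<in>C. \<Sum>v\<in>C. adj E u v - real (degree V E u) * real (degree V E v) / (2 * m)))"

end

theory Submission
  imports Defs
begin

lemma handshake:
  assumes sg: "simple_graph V E"
  shows "(\<Sum>v\<in>V. degree V E v) = 2 * card E"
proof -
  have fV: "finite V" using sg by (simp add: simple_graph_def)
  have EV: "E \<subseteq> Pow V" using sg by (auto simp: simple_graph_def)
  have fE: "finite E" using EV fV by (meson finite_Pow_iff finite_subset)
  define f where "f e = {p \<in> V \<times> V. {snd p, fst p} = e}" for e
  have P: "(SIGMA v:V. {u\<in>V. {u,v}\<in>E}) = (\<Union>e\<in>E. f e)"
    by (auto simp: f_def)
  have c2: "card (f e) = 2" if eE: "e \<in> E" for e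
  proof -
    obtain a b where ab: "e = {a,b}" "a \<noteq> b" "a \<in> V" "b \<in> V"
      using sg eE unfolding simple_graph_def by meson
    have "f e = {(b,a),(a,b)}" using ab by (auto simp: f_def doubleton_eq_iff)
    then show ?thesis using ab by simp
  qed
  have "(\<Sum>v\<in>V. degree V E v) = card (SIGMA v:V. {u\<in>V. {u,v}\<in>E})"
    using fV by (simp add: degree_def card_SigmaI)
  also have "\<dots> = card (\<Union>e\<in>E. f e)" using P by simp
  also have "\<dots> = (\<Sum>e\<in>E. card (f e))"
    by (rule card_UN_disjoint) (use fE fV in \<open>auto simp: f_def\<close>)
  also have "\<dots> = 2 * card E" using c2 by simp
  finally show ?thesis .
qed

theorem lemma6:
  fixes V :: "'a set" and E :: "'a set set" and n :: nat and Vi :: "'a set" and t :: real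
  assumes "simple_graph V E"
    and "card V = n" and "n > 4"
    and "regular V E (n - 4)"
    and "Vi \<noteq> {}" and "Vi \<subseteq> V"
    and "real (card Vi) = t * real n"
  shows "real n * (real n - 4) * modularity V E Vi \<le> (4 * t\<^sup>2 - t) * real n
         \<and> (real (card Vi) \<le> real n / 4 \<longrightarrow> modularity V E Vi \<le> 0)
         \<and> (\<forall>\<delta>::real. \<delta> > 0 \<longrightarrow> real (card Vi) = (1/4 + \<delta>) * real n \<longrightarrow>
               real n * (real n - 4) * modularity V E Vi \<le> (4 * \<delta>\<^sup>2 + \<delta>) * real n)"
proof -
  have fV: "finite V" using assms(1) by (simp add: simple_graph_def)
  have fVi: "finite Vi" using fV assms(6) finite_subset by blast
  define k where "k = real (card Vi)"
  define d where "d = real n - 4"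
  have dpos: "d > 0" using assms(3) by (simp add: d_def)
  have npos: "real n > 0" using assms(3) by simp
  have deg: "real (degree V E v) = d" if "v \<in> V" for v
    using assms(4) that assms(3) by (auto simp: regular_def d_def)
  have "2 * card E = n * (n - 4)"
    using handshake[OF assms(1)] assms(2,4) by (simp add: regular_def)
  hence m2: "2 * real (card E) = real n * d"
    using assms(3) unfolding d_def by (metis of_nat_diff of_nat_mult of_nat_numeral less_imp_le_nat of_nat_mult)
  define S where "S = (\<Sum>u\<in>Vi. \<Sum>v\<in>Vi. adj E u v)"
  have adj0: "adj E u u = 0" for u
    using assms(1) by (auto simp: adj_def simple_graph_def)
  have rowb: "(\<Sum>v\<in>Vi. adj E u v) \<le> k - 1" if uV: "u \<in> Vi" for u
  proof -
    have "(\<Sum>v\<in>Vi. adj E u v) = (\<Sum>v\<in>Vi - {u}. adj E u v) + adj E u u"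
      using that fVi by (metis add.commute sum.remove)
    also have "\<dots> = (\<Sum>v\<in>Vi - {u}. adj E u v)" by (simp add: adj0)
    also have "\<dots> \<le> (\<Sum>v\<in>Vi - {u}. 1)" by (rule sum_mono) (simp add: adj_def)
    also have "\<dots> = k - 1" proof -
      have "card Vi \<ge> 1" by (metis One_nat_def Suc_leI card_gt_0_iff empty_iff fVi uV)
      thus ?thesis using that fVi by (simp add: k_def card_Diff_singleton of_nat_diff)
    qed
    finally show ?thesis .
  qed
  have Sb: "S \<le> k * (k - 1)"
  proof -
    have "S \<le> (\<Sum>u\<in>Vi. k - 1)" unfolding S_def by (rule sum_mono) (use rowb in auto)
    thus ?thesis by (simp add: k_def mult.commute)
  qed
  have D: "(\<Sum>u\<in>Vi. \<Sum>v\<in>Vi. real (degree V E u) * real (degree V E v) / (2 * real (card E)))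
      = k * k * (d * d / (real n * d))"
    using assms(6) deg m2 by (simp add: k_def subset_iff)
  have M: "modularity V E Vi = (1 / (real n * d)) * (S - k * k * d / real n)"
    unfolding modularity_def Let_def S_def
    using D m2 dpos npos by (simp add: sum_subtractf sum.distrib)
  have key: "real n * d * modularity V E Vi = S - k * k * d / real n"
    using M dpos npos by simp
  have main: "real n * d * modularity V E Vi \<le> 4 * k * k / real n - k"
  proof -
    have "S - k * k * d / real n \<le> k * (k - 1) - k * k * d / real n" using Sb by simp
    also have "\<dots> = 4 * k * k / real n - k" using npos by (simp add: d_def field_simps)
    finally show ?thesis using key by simp
  qed
  have kt: "k = t * real n" using assms(7) k_def by simp
  have p1: "real n * (real n - 4) * modularity V E Vi \<le> (4 * t\<^sup>2 - t) * real n"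
  proof -
    have "4 * k * k / real n - k = (4 * t\<^sup>2 - t) * real n"
      using npos kt by (simp add: field_simps power2_eq_square)
    thus ?thesis using main d_def by simp
  qed
  have p2: "modularity V E Vi \<le> 0" if "k \<le> real n / 4"
  proof -
    have k0: "k \<ge> 0" by (simp add: k_def)
    have "4 * k * k / real n - k = k * (4 * k / real n - 1)" using npos by (simp add: field_simps)
    also have "\<dots> \<le> 0" using that k0 npos
      by (intro mult_nonneg_nonpos) (auto simp: field_simps)
    finally have "real n * d * modularity V E Vi \<le> 0" using main by simp
    thus ?thesis using npos dpos by (simp add: mult_le_0_iff zero_less_mult_iff)
  qed
  have p3: "real n * (real n - 4) * modularity V E Vi \<le> (4 * \<delta>\<^sup>2 + \<delta>) * real n"
    if "k = (1/4 + \<delta>) * real n" for \<delta>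
  proof -
    have "4 * k * k / real n - k = (4 * \<delta>\<^sup>2 + \<delta>) * real n"
      using npos that by (simp add: field_simps power2_eq_square)
    thus ?thesis using main d_def by simp
  qed
  show ?thesis using p1 p2 p3 k_def by auto
qed

end
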